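(* Let $\pi$ be a probability measure on $\mathbb{R}^2$ whose first marginal $\pi_1$ has no atoms, and let $\psi:\mathbb{R}\to\mathbb{R}$ be a Borel function. Define $R_{op}=\{(x,y):x>\psi(y)\}$ and $R_{cl}=\{(x,y):x\ge\psi(y)\}$. Let $B$ be a standard Brownian motion started at $0$, and define $\tau_{op}(x,y)=\inf\{t\ge0:(x,y+B_t)\in R_{op}\}$ and $\tau_{cl}(x,y)=\inf\{t\ge0:(x,y+B_t)\in R_{cl}\}$. If $(X,Y)$ has distribution $\pi$ and is independent of $B$, then $\tau_{cl}(X,Y)=\tau_{op}(X,Y)$ almost surely. *)

theory Defs
  imports "HOL-Probability.Probability"
begin

text \<open>Standard (one-dimensional) Brownian motion started at 0 on a probability space M,
  indexed by times t \<ge> 0 (values at negative times are irrelevant).\<close>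
definition std_brownian_motion :: "'a measure \<Rightarrow> (real \<Rightarrow> 'a \<Rightarrow> real) \<Rightarrow> bool" where
  "std_brownian_motion M B \<longleftrightarrow>
     prob_space M \<and>
     (\<forall>t\<ge>0. B t \<in> borel_measurable M) \<and>
     (\<forall>\<omega>\<in>space M. B 0 \<omega> = 0) \<and>
     (\<forall>\<omega>\<in>space M. continuous_on {0..} (\<lambda>t. B t \<omega>)) \<and>
     (\<forall>s t. 0 \<le> s \<and> s < t \<longrightarrow>
        distributed M lborel (\<lambda>\<omega>. B t \<omega> - B s \<omega>)
          (\<lambda>x. ennreal (normal_density 0 (sqrt (t - s)) x))) \<and>
     (\<forall>(ts :: nat \<Rightarrow> real) n. 0 \<le> ts 0 \<and> (\<forall>i<n. ts i < ts (Suc i)) \<longrightarrow>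
        prob_space.indep_vars M (\<lambda>_. borel)
          (\<lambda>i \<omega>. B (ts (Suc i)) \<omega> - B (ts i) \<omega>) {..<n})"

text \<open>Independence of two random variables with possibly different value types
  (the library's indep_var requires equal types; this is its unfolding, cf. indep_var_eq).\<close>
definition indep_rvs :: "'a measure \<Rightarrow> 'b measure \<Rightarrow> ('a \<Rightarrow> 'b) \<Rightarrow> 'c measure \<Rightarrow> ('a \<Rightarrow> 'c) \<Rightarrow> bool" where
  "indep_rvs M S X T Y \<longleftrightarrow>
     X \<in> measurable M S \<and> Y \<in> measurable M T \<and>
     prob_space.indep_set M
       {X -` A \<inter> space M | A. A \<in> sets S}
       {Y -` A \<inter> space M | A. A \<in> sets T}"

text \<open>First hitting time of a set R by the process t \<mapsto> (x, y + B_t), with inf \<emptyset> = \<infinity>.\<close>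
definition hitting_time ::
    "(real \<times> real) set \<Rightarrow> (real \<Rightarrow> 'a \<Rightarrow> real) \<Rightarrow> real \<Rightarrow> real \<Rightarrow> 'a \<Rightarrow> ereal" where
  "hitting_time R B x y \<omega> = Inf (ereal ` {t. t \<ge> 0 \<and> (x, y + B t \<omega>) \<in> R})"

end

theory Submission
  imports Defs
begin

lemma indep_rvs_distr_pair:
  assumes P: "prob_space M" and I: "indep_rvs M S X T Y"
  shows "distr M S X \<Otimes>\<^sub>M distr M T Y = distr M (S \<Otimes>\<^sub>M T) (\<lambda>x. (X x, Y x))"
proof -
  interpret prob_space M by fact
  have rvs: "X \<in> measurable M S" "Y \<in> measurable M T" and ind:
    "indep_set {X -` A \<inter> space M | A. A \<in> sets S} {Y -` A \<inter> space M | A. A \<in> sets T}"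
    using I unfolding indep_rvs_def by auto
  then have XY: "(\<lambda>x. (X x, Y x)) \<in> measurable M (S \<Otimes>\<^sub>M T)"
    by (intro measurable_Pair)
  let ?S = "distr M S X" and ?T = "distr M T Y" and ?J = "distr M (S \<Otimes>\<^sub>M T) (\<lambda>x. (X x, Y x))"
  interpret X: prob_space ?S by (rule prob_space_distr) fact
  interpret Y: prob_space ?T by (rule prob_space_distr) fact
  show "?S \<Otimes>\<^sub>M ?T = ?J"
  proof (rule pair_measure_eqI)
    show "sigma_finite_measure ?S" ..
    show "sigma_finite_measure ?T" ..
    fix A B assume A: "A \<in> sets ?S" and B: "B \<in> sets ?T"
    have "emeasure ?J (A \<times> B) = emeasure M ((\<lambda>x. (X x, Y x)) -` (A \<times> B) \<inter> space M)"
      using A B by (intro emeasure_distr[OF XY]) auto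
    also have "\<dots> = emeasure M ((X -` A \<inter> space M) \<inter> (Y -` B \<inter> space M))"
      by (intro arg_cong[where f="emeasure M"]) auto
    also have "\<dots> = emeasure M (X -` A \<inter> space M) * emeasure M (Y -` B \<inter> space M)"
    proof -
      have "prob ((X -` A \<inter> space M) \<inter> (Y -` B \<inter> space M)) = prob (X -` A \<inter> space M) * prob (Y -` B \<inter> space M)"
      proof -
        have a: "X -` A \<inter> space M \<in> {X -` A \<inter> space M | A. A \<in> sets S}" using A by auto
        have b: "Y -` B \<inter> space M \<in> {Y -` A \<inter> space M | A. A \<in> sets T}" using B by auto
        show ?thesis using ind[unfolded indep_sets2_eq] a b by blast
      qed
      moreover have "(X -` A \<inter> space M) \<in> events" "(Y -` B \<inter> space M) \<in> events"
        using rvs A B by auto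
      ultimately show ?thesis
        by (simp add: emeasure_eq_measure measure_nonneg ennreal_mult)
    qed
    also have "\<dots> = emeasure ?S A * emeasure ?T B"
      using rvs A B by (simp add: emeasure_distr)
    finally show "emeasure ?S A * emeasure ?T B = emeasure ?J (A \<times> B)" by simp
  qed simp
qed

lemma indep_rvs_null:
  assumes P: "prob_space M" and I: "indep_rvs M S X T Y"
    and E: "E \<in> sets (S \<Otimes>\<^sub>M T)"
    and Z: "\<And>x. x \<in> space S \<Longrightarrow> emeasure (distr M T Y) (Pair x -` E) = 0"
  shows "emeasure M {\<omega>\<in>space M. (X \<omega>, Y \<omega>) \<in> E} = 0"
proof -
  interpret prob_space M by fact
  have rvs: "X \<in> measurable M S" "Y \<in> measurable M T"
    using I unfolding indep_rvs_def by auto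
  then have XY: "(\<lambda>x. (X x, Y x)) \<in> measurable M (S \<Otimes>\<^sub>M T)"
    by (intro measurable_Pair)
  interpret Y: prob_space "distr M T Y" by (rule prob_space_distr) fact
  have "emeasure M {\<omega>\<in>space M. (X \<omega>, Y \<omega>) \<in> E} = emeasure (distr M (S \<Otimes>\<^sub>M T) (\<lambda>x. (X x, Y x))) E"
    using E XY by (subst emeasure_distr) (auto intro!: arg_cong[where f="emeasure M"])
  also have "\<dots> = emeasure (distr M S X \<Otimes>\<^sub>M distr M T Y) E"
    using indep_rvs_distr_pair[OF P I] by simp
  also have "\<dots> = (\<integral>\<^sup>+ x. emeasure (distr M T Y) (Pair x -` E) \<partial>distr M S X)"
    using E by (intro Y.emeasure_pair_measure_alt) auto
  also have "\<dots> = 0"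
    using Z by (intro nn_integral_zero') (auto intro!: AE_I2)
  finally show ?thesis .
qed

definition Dy :: "real set" where "Dy = {t. \<exists>j n::nat. t = real j / 2^n}"
definition DD :: "real \<Rightarrow> real set" where "DD q = Dy \<inter> {0..q}"
definition supeq :: "real set \<Rightarrow> (real \<Rightarrow> real) \<Rightarrow> real \<Rightarrow> bool" where
  "supeq D f c \<longleftrightarrow> (\<forall>t\<in>D. f t \<le> c) \<and> (\<forall>n::nat. \<exists>t\<in>D. c - 1/(real n+1) < f t)"
definition Cset :: "(real \<Rightarrow> real) \<Rightarrow> real set" where
  "Cset \<psi> = (\<lambda>(a,b). Inf (\<psi> ` {a<..<b})) ` (\<rat> \<times> \<rat>)"
definition Phi :: "(real\<Rightarrow>real) \<Rightarrow> real \<Rightarrow> real \<Rightarrow> ereal" where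
  "Phi \<psi> r x = Inf (ereal ` {w. r \<le> w \<and> \<psi> w < x})"
definition Phi' :: "(real\<Rightarrow>real) \<Rightarrow> real \<Rightarrow> real \<Rightarrow> ereal" where
  "Phi' \<psi> r x = Sup (ereal ` {w. w \<le> r \<and> \<psi> w < x})"

lemma notC_interior:
  assumes "x \<notin> Cset \<psi>" "a < v" "v < b" "\<psi> v = x"
  shows "\<exists>w. a < w \<and> w < b \<and> \<psi> w < x"
proof (rule ccontr)
  assume "\<not> ?thesis"
  then have h: "\<And>w. a < w \<Longrightarrow> w < b \<Longrightarrow> x \<le> \<psi> w" by force
  obtain a' where a': "a' \<in> \<rat>" "a < a'" "a' < v" using Rats_dense_in_real assms by blast
  obtain b' where b': "b' \<in> \<rat>" "v < b'" "b' < b" using Rats_dense_in_real assms by blast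
  have "Inf (\<psi> ` {a'<..<b'}) = x"
    by (rule cInf_eq_minimum) (use a' b' h assms in auto)
  then have "x \<in> Cset \<psi>" unfolding Cset_def using a' b'
    by (intro image_eqI[of _ _ "(a',b')"]) auto
  with assms show False by simp
qed

lemma Phi_eq:
  assumes nC: "x \<notin> Cset \<psi>" and pv: "\<psi> v = x" and rv: "r < v"
    and h: "\<And>w. r \<le> w \<Longrightarrow> w < v \<Longrightarrow> x \<le> \<psi> w"
  shows "Phi \<psi> r x = ereal v"
proof -
  let ?S = "{w. r \<le> w \<and> \<psi> w < x}"
  have lb: "v \<le> w" if "w \<in> ?S" for w
  proof (rule ccontr)
    assume "\<not> v \<le> w" then show False using h[of w] that by auto
  qed
  have cl: "\<exists>w\<in>?S. w < v + e" if "e > 0" for e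
  proof -
    have "v < v + e" using that by simp
    then obtain w where "r < w" "w < v+e" "\<psi> w < x" using notC_interior[OF nC rv _ pv] by blast
    then show ?thesis by (intro bexI[of _ w]) auto
  qed
  show ?thesis unfolding Phi_def
  proof (rule antisym)
    show "ereal v \<le> Inf (ereal ` ?S)" using lb by (auto intro!: Inf_greatest)
    show "Inf (ereal ` ?S) \<le> ereal v"
    proof (rule ereal_le_epsilon2)
      fix e :: real assume "e > 0"
      then obtain w where "w \<in> ?S" "w < v + e" using cl by blast
      then have "Inf (ereal ` ?S) \<le> ereal w" by (intro Inf_lower) auto
      also have "\<dots> \<le> ereal v + ereal e" using \<open>w < v + e\<close> by simp
      finally show "Inf (ereal ` ?S) \<le> ereal v + ereal e" .
    qed
  qed
qed

lemma Phi'_eq: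
  assumes nC: "x \<notin> Cset \<psi>" and pv: "\<psi> v = x" and rv: "v < r"
    and h: "\<And>w. v < w \<Longrightarrow> w \<le> r \<Longrightarrow> x \<le> \<psi> w"
  shows "Phi' \<psi> r x = ereal v"
proof -
  let ?S = "{w. w \<le> r \<and> \<psi> w < x}"
  have ub: "w \<le> v" if "w \<in> ?S" for w
  proof (rule ccontr)
    assume "\<not> w \<le> v" then show False using h[of w] that by auto
  qed
  have cl: "\<exists>w\<in>?S. v - e < w" if "e > 0" for e
  proof -
    have "v - e < v" using that by simp
    then obtain w where "v - e < w" "w < r" "\<psi> w < x" using notC_interior[OF nC _ rv pv] by blast
    then show ?thesis by (intro bexI[of _ w]) auto
  qed
  show ?thesis unfolding Phi'_def
  proof (rule antisym)
    show "Sup (ereal ` ?S) \<le> ereal v" using ub by (auto intro!: Sup_least)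
    show "ereal v \<le> Sup (ereal ` ?S)"
    proof (rule ereal_le_epsilon2)
      fix e :: real assume "e > 0"
      then obtain w where "w \<in> ?S" "v - e < w" using cl by blast
      then have "ereal w \<le> Sup (ereal ` ?S)" by (intro Sup_upper) auto
      moreover have "ereal v \<le> ereal w + ereal e" using \<open>v - e < w\<close> by simp
      ultimately show "ereal v \<le> Sup (ereal ` ?S) + ereal e"
        by (metis add_right_mono order_trans)
    qed
  qed
qed

lemma dyadic_below:
  assumes "0 \<le> t" "0 < d"
  shows "\<exists>u\<in>Dy. 0 \<le> u \<and> u \<le> t \<and> t - u < d"
proof -
  obtain k :: nat where k: "(1/2::real)^k < d" using real_arch_pow_inv[of d "1/2"] assms by auto
  define j where "j = nat \<lfloor>t * 2^k\<rfloor>"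
  have fl: "real j = of_int \<lfloor>t * 2^k\<rfloor>" unfolding j_def using assms by simp
  have h1: "real j \<le> t * 2^k" "t * 2^k < real j + 1" unfolding fl by linarith+
  have p: "(0::real) < 2^k" by simp
  have "real j / 2^k \<le> t" using h1 p by (simp add: divide_le_eq)
  moreover have "t - real j / 2^k = (t * 2^k - real j) / 2^k" using p by (simp add: field_simps)
  moreover have "(t * 2^k - real j) / 2^k < 1 / 2^k" by (rule divide_strict_right_mono) (use h1 p in auto)
  ultimately have "real j / 2^k \<le> t" "t - real j / 2^k < 1 / 2^k" by auto
  moreover have "(1::real) / 2^k = (1/2)^k" by (simp add: power_divide)
  ultimately show ?thesis using k
    by (intro bexI[of _ "real j / 2^k"]) (auto simp: Dy_def)
qed

lemma dyadic_between:
  assumes "0 \<le> t" "t < s"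
  shows "\<exists>q\<in>Dy. t < q \<and> q < s"
proof -
  obtain k :: nat where k: "(1/2::real)^k < s - t" using real_arch_pow_inv[of "s - t" "1/2"] assms by auto
  define j where "j = nat \<lfloor>t * 2^k\<rfloor> + 1"
  have fl: "real j = of_int \<lfloor>t * 2^k\<rfloor> + 1" unfolding j_def using assms by simp
  have h1: "t * 2^k < real j" "real j \<le> t * 2^k + 1" unfolding fl by linarith+
  have p: "(0::real) < 2^k" by simp
  have "t < real j / 2^k" using h1 p by (simp add: less_divide_eq)
  moreover have "real j / 2^k \<le> (t * 2^k + 1) / 2^k" by (rule divide_right_mono) (use h1 p in auto)
  moreover have "(t * 2^k + 1) / 2^k = t + 1 / 2^k" using p by (simp add: field_simps)
  ultimately have "t < real j / 2^k" "real j / 2^k \<le> t + 1 / 2^k" by auto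
  moreover have "(1::real) / 2^k = (1/2)^k" by (simp add: power_divide)
  ultimately show ?thesis using k
    by (intro bexI[of _ "real j / 2^k"]) (auto simp: Dy_def)
qed

lemma supeq_at_max:
  assumes cont: "continuous_on {0..} z" and t: "0 \<le> t" "t \<le> q"
    and mx: "\<And>u. 0 \<le> u \<Longrightarrow> u \<le> q \<Longrightarrow> z u \<le> z t"
  shows "supeq (DD q) z (z t)"
  unfolding supeq_def
proof (intro conjI ballI allI)
  fix u assume "u \<in> DD q" then show "z u \<le> z t" using mx by (auto simp: DD_def)
next
  fix n :: nat
  have e: "(0::real) < 1/(real n+1)" by simp
  from cont t obtain d where d: "d > 0" "\<And>u. u \<in> {0..} \<Longrightarrow> dist u t < d \<Longrightarrow> dist (z u) (z t) < 1/(real n+1)"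
    unfolding continuous_on_iff using e by (metis atLeast_iff)
  obtain u where u: "u \<in> Dy" "0 \<le> u" "u \<le> t" "t - u < d" using dyadic_below[OF t(1) d(1)] by blast
  then have "dist (z u) (z t) < 1/(real n+1)" using d(2)[of u] by (auto simp: dist_real_def)
  then have "z t - 1/(real n+1) < z u" by (auto simp: dist_real_def)
  moreover have "u \<in> DD q" using u t by (auto simp: DD_def)
  ultimately show "\<exists>u\<in>DD q. z t - 1/(real n+1) < z u" by blast
qed

lemma det:
  fixes \<psi> z :: "real \<Rightarrow> real" and x y :: real
  assumes cont: "continuous_on {0..} z" and z0: "z 0 = y" and nC: "x \<notin> Cset \<psi>"
    and A1: "\<And>q. q \<in> Dy \<Longrightarrow> 0 < q \<Longrightarrow> \<not> supeq (DD q) z y"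
    and A2: "\<And>q r. q \<in> Dy \<Longrightarrow> 0 < q \<Longrightarrow> r \<in> \<rat> \<Longrightarrow> \<not> supeq (DD q) z (real_of_ereal (Phi \<psi> r x))"
    and A3: "\<And>q r. q \<in> Dy \<Longrightarrow> 0 < q \<Longrightarrow> r \<in> \<rat> \<Longrightarrow> \<not> supeq (DD q) (\<lambda>t. - z t) (- real_of_ereal (Phi' \<psi> r x))"
  shows "Inf (ereal ` {t. 0 \<le> t \<and> \<psi> (z t) \<le> x}) = Inf (ereal ` {t. 0 \<le> t \<and> \<psi> (z t) < x})"
proof (rule antisym)
  show "Inf (ereal ` {t. 0 \<le> t \<and> \<psi> (z t) \<le> x}) \<le> Inf (ereal ` {t. 0 \<le> t \<and> \<psi> (z t) < x})"
    by (intro Inf_superset_mono image_mono) auto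
  show "Inf (ereal ` {t. 0 \<le> t \<and> \<psi> (z t) < x}) \<le> Inf (ereal ` {t. 0 \<le> t \<and> \<psi> (z t) \<le> x})"
  proof (rule ccontr)
    let ?Sc = "{t. 0 \<le> t \<and> \<psi> (z t) \<le> x}" and ?So = "{t. 0 \<le> t \<and> \<psi> (z t) < x}"
    assume "\<not> ?thesis"
    then have lt: "Inf (ereal ` ?Sc) < Inf (ereal ` ?So)" by simp
    obtain s0 where s0: "Inf (ereal ` ?Sc) < ereal s0" "ereal s0 < Inf (ereal ` ?So)"
      using ereal_dense2[OF lt] by blast
    obtain t where t: "0 \<le> t" "\<psi> (z t) \<le> x" "t < s0"
      using s0(1) unfolding Inf_less_iff by auto
    have hop: "x \<le> \<psi> (z u)" if "0 \<le> u" "u \<le> s0" for u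
    proof (rule ccontr)
      assume "\<not> x \<le> \<psi> (z u)"
      then have "Inf (ereal ` ?So) \<le> ereal u" using that by (intro Inf_lower) auto
      moreover have "ereal u \<le> ereal s0" using that by simp
      ultimately show False using s0(2) by (meson leD order_trans)
    qed
    have cs: "continuous_on {0..s0} z" using cont by (rule continuous_on_subset) auto
    have ne: "{0..s0} \<noteq> {}" using t by auto
    obtain tM where tM: "tM \<in> {0..s0}" "\<And>u. u \<in> {0..s0} \<Longrightarrow> z u \<le> z tM"
      using continuous_attains_sup[OF compact_Icc ne cs] by blast
    obtain tm where tm: "tm \<in> {0..s0}" "\<And>u. u \<in> {0..s0} \<Longrightarrow> z tm \<le> z u"
      using continuous_attains_inf[OF compact_Icc ne cs] by blast
    define M where "M = z tM"
    define m where "m = z tm"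
    have ivt: "\<exists>u\<in>{0..s0}. z u = w" if "m \<le> w" "w \<le> M" for w
    proof (cases "tm \<le> tM")
      case True
      have "continuous_on {tm..tM} z" using tm tM by (intro continuous_on_subset[OF cs]) auto
      moreover have "z tm \<le> w" "w \<le> z tM" using that unfolding m_def M_def by auto
      ultimately obtain u where "tm \<le> u" "u \<le> tM" "z u = w"
        using IVT'[of z tm w tM] True by blast
      then show ?thesis using tm tM by (intro bexI[of _ u]) auto
    next
      case False
      have "continuous_on {tM..tm} z" using tm tM by (intro continuous_on_subset[OF cs]) auto
      moreover have "z tm \<le> w" "w \<le> z tM" using that unfolding m_def M_def by auto
      moreover have "tM \<le> tm" using False by simp
      ultimately obtain u where "tM \<le> u" "u \<le> tm" "z u = w"
        using IVT2'[of z tm w tM] by blast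
      then show ?thesis using tm tM by (intro bexI[of _ u]) auto
    qed
    have hp: "x \<le> \<psi> w" if "m \<le> w" "w \<le> M" for w
      using ivt[OF that] hop by auto
    define v where "v = z t"
    have tin: "t \<in> {0..s0}" using t by auto
    have vm: "m \<le> v" "v \<le> M" using tm(2)[OF tin] tM(2)[OF tin] unfolding v_def m_def M_def by auto
    have pv: "\<psi> v = x" using hp[OF vm] t(2) unfolding v_def by auto
    have notint: "\<not> (m < v \<and> v < M)"
    proof
      assume "m < v \<and> v < M"
      then obtain w where "m < w" "w < M" "\<psi> w < x" using notC_interior[OF nC _ _ pv] by blast
      with hp[of w] show False by auto
    qed
    obtain q where q: "q \<in> Dy" "t < q" "q < s0" using dyadic_between[OF t(1) t(3)] by blast
    have q0: "0 < q" using q t by auto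
    show False
    proof (cases "v = M")
      case True
      have sq: "supeq (DD q) z v" unfolding v_def
      proof (rule supeq_at_max[OF cont t(1)])
        show "t \<le> q" using q by simp
        fix u assume "0 \<le> u" "u \<le> q"
        then have "z u \<le> z tM" using q by (intro tM(2)) simp
        then show "z u \<le> z t" using True unfolding v_def M_def by simp
      qed
      show False
      proof (cases "m = M")
        case True
        have "m \<le> y" "y \<le> M" using tm(2)[of 0] tM(2)[of 0] t z0 unfolding m_def M_def by auto
        then have "y = v" using True vm by auto
        with A1[OF q(1) q0] sq show False by simp
      next
        case False
        then have "m < v" using vm \<open>v = M\<close> by auto
        then obtain r where r: "r \<in> \<rat>" "m < r" "r < v" using Rats_dense_in_real by blast
        have "Phi \<psi> r x = ereal v"
          by (rule Phi_eq[OF nC pv r(3)]) (use hp r vm in auto)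
        then have "real_of_ereal (Phi \<psi> r x) = v" by simp
        with A2[OF q(1) q0 r(1)] sq show False by simp
      qed
    next
      case False
      then have vm2: "v = m" "m < M" using notint vm by auto
      have sq: "supeq (DD q) (\<lambda>t. - z t) (- v)" unfolding v_def
      proof (rule supeq_at_max[where z="\<lambda>t. - z t", OF continuous_on_minus[OF cont] t(1), simplified])
        show "t \<le> q" using q by simp
        fix u assume "0 \<le> u" "u \<le> q"
        then have "z tm \<le> z u" using q by (intro tm(2)) simp
        then show "z t \<le> z u" using vm2(1) unfolding v_def m_def by simp
      qed
      obtain r where r: "r \<in> \<rat>" "v < r" "r < M" using Rats_dense_in_real vm2 by blast
      have "Phi' \<psi> r x = ereal v"
        by (rule Phi'_eq[OF nC pv r(2)]) (use hp r vm in auto)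
      then have "real_of_ereal (Phi' \<psi> r x) = v" by simp
      with A3[OF q(1) q0 r(1)] sq show False by simp
    qed
  qed
qed

lemma countable_Dy: "countable Dy"
proof -
  have "Dy = (\<lambda>(j,n). real j / 2^n) ` (UNIV :: (nat \<times> nat) set)" unfolding Dy_def by auto
  then show ?thesis by (metis countableI_type countable_image)
qed

lemma Dy_div: "q \<in> Dy \<Longrightarrow> q / 2^k \<in> Dy"
  unfolding Dy_def by (auto simp: power_add) (metis divide_divide_eq_left power_add)

lemma Dy_0: "0 \<in> Dy" unfolding Dy_def by (auto intro!: exI[of _ 0])

lemma supeq_shift: "supeq D (\<lambda>t. a + F t) c \<longleftrightarrow> supeq D F (c - a)"
  unfolding supeq_def by (auto simp: algebra_simps)

lemma supeq_pred:
  fixes F :: "real \<Rightarrow> 'a \<Rightarrow> real" and c :: real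
  assumes cD: "countable D" and Fm: "\<And>t. t \<in> D \<Longrightarrow> F t \<in> borel_measurable N"
  shows "Measurable.pred N (\<lambda>x. supeq D (\<lambda>t. F t x) c)"
  unfolding supeq_def
proof (intro pred_intros_logic measurable_pred_countable[OF cD] pred_intros_countable)
  fix t assume "t \<in> D"
  note [measurable] = Fm[OF this]
  show "Measurable.pred N (\<lambda>x. F t x \<le> c)" by measurable
  fix n :: nat show "Measurable.pred N (\<lambda>x. c - 1 / (real n + 1) < F t x)" by measurable
qed

lemma supeq_sets:
  fixes F :: "real \<Rightarrow> 'a \<Rightarrow> real" and c :: real
  assumes "countable D" "\<And>t. t \<in> D \<Longrightarrow> F t \<in> borel_measurable N"
  shows "{x\<in>space N. supeq D (\<lambda>t. F t x) c} \<in> sets N"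
  using supeq_pred[OF assms, where c=c] by (simp add: pred_def)

lemma bm_prob: "std_brownian_motion M B \<Longrightarrow> prob_space M"
  unfolding std_brownian_motion_def by simp
lemma bm_meas: "std_brownian_motion M B \<Longrightarrow> 0 \<le> t \<Longrightarrow> B t \<in> borel_measurable M"
  unfolding std_brownian_motion_def by simp
lemma bm_zero: "std_brownian_motion M B \<Longrightarrow> \<omega> \<in> space M \<Longrightarrow> B 0 \<omega> = 0"
  unfolding std_brownian_motion_def by simp
lemma bm_cont: "std_brownian_motion M B \<Longrightarrow> \<omega> \<in> space M \<Longrightarrow> continuous_on {0..} (\<lambda>t. B t \<omega>)"
  unfolding std_brownian_motion_def by simp
lemma bm_distr: "std_brownian_motion M B \<Longrightarrow> 0 \<le> s \<Longrightarrow> s < t \<Longrightarrow>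
   distributed M lborel (\<lambda>\<omega>. B t \<omega> - B s \<omega>) (\<lambda>x. ennreal (normal_density 0 (sqrt (t - s)) x))"
  unfolding std_brownian_motion_def by simp
lemma bm_indep: "std_brownian_motion M B \<Longrightarrow> 0 \<le> ts 0 \<Longrightarrow> (\<And>i. i < n \<Longrightarrow> ts i < ts (Suc i)) \<Longrightarrow>
   prob_space.indep_vars M (\<lambda>_. borel) (\<lambda>i \<omega>. B (ts (Suc i)) \<omega> - B (ts i) \<omega>) {..<n}"
  unfolding std_brownian_motion_def by simp

lemma bm_point_null:
  assumes bm: "std_brownian_motion M B" and a: "0 < a"
  shows "emeasure M {\<omega>\<in>space M. B a \<omega> = c} = 0"
proof -
  have d: "distributed M lborel (\<lambda>\<omega>. B a \<omega> - B 0 \<omega>) (\<lambda>x. ennreal (normal_density 0 (sqrt (a - 0)) x))"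
    using bm_distr[OF bm _ a] by simp
  have "{\<omega>\<in>space M. B a \<omega> = c} = (\<lambda>\<omega>. B a \<omega> - B 0 \<omega>) -` {c} \<inter> space M"
    using bm_zero[OF bm] by auto
  also have "emeasure M \<dots> = (\<integral>\<^sup>+x. ennreal (normal_density 0 (sqrt (a - 0)) x) * indicator {c} x \<partial>lborel)"
    by (rule distributed_emeasure[OF d]) simp
  also have "\<dots> = 0"
    using AE_lborel_singleton[of c] by (intro nn_integral_zero') (auto elim!: eventually_mono)
  finally show ?thesis .
qed

lemma bm_uminus:
  assumes bm: "std_brownian_motion M B"
  shows "std_brownian_motion M (\<lambda>t \<omega>. - B t \<omega>)"
proof -
  interpret prob_space M using bm_prob[OF bm] .
  show ?thesis
    unfolding std_brownian_motion_def
  proof (intro conjI allI impI ballI)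
    show "prob_space M" by unfold_locales
    fix t :: real assume "0 \<le> t" then show "(\<lambda>\<omega>. - B t \<omega>) \<in> borel_measurable M"
      using bm_meas[OF bm] by measurable
  next
    fix \<omega> assume "\<omega> \<in> space M"
    then show "- B 0 \<omega> = 0" "continuous_on {0..} (\<lambda>t. - B t \<omega>)"
      using bm_zero[OF bm] bm_cont[OF bm] by (auto intro: continuous_on_minus)
  next
    fix s t :: real assume st: "0 \<le> s \<and> s < t"
    have "distributed M lborel (\<lambda>x. 0 + (-1) * (B t x - B s x)) (normal_density (0 + (-1) * 0) (\<bar>-1\<bar> * sqrt (t - s)))"
      by (rule normal_density_affine) (use bm_distr[OF bm] st in auto)
    then show "distributed M lborel (\<lambda>\<omega>. - B t \<omega> - - B s \<omega>) (\<lambda>x. ennreal (normal_density 0 (sqrt (t - s)) x))"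
      by simp
  next
    fix ts :: "nat \<Rightarrow> real" and n assume h: "0 \<le> ts 0 \<and> (\<forall>i<n. ts i < ts (Suc i))"
    have "indep_vars (\<lambda>_. borel) (\<lambda>i \<omega>. uminus (B (ts (Suc i)) \<omega> - B (ts i) \<omega>)) {..<n}"
      by (rule indep_vars_compose2[OF bm_indep[OF bm]]) (use h in auto)
    then show "indep_vars (\<lambda>_. borel) (\<lambda>i \<omega>. - B (ts (Suc i)) \<omega> - - B (ts i) \<omega>) {..<n}"
      by simp
  qed
qed

lemma indep_rvs_compose2:
  assumes P: "prob_space M" and I: "indep_rvs M S X T Y" and f: "f \<in> measurable T T'"
  shows "indep_rvs M S X T' (\<lambda>\<omega>. f (Y \<omega>))"
proof -
  interpret prob_space M by fact
  have rvs: "X \<in> measurable M S" "Y \<in> measurable M T" and ind: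
    "indep_set {X -` A \<inter> space M | A. A \<in> sets S} {Y -` A \<inter> space M | A. A \<in> sets T}"
    using I unfolding indep_rvs_def by auto
  have sub: "{(\<lambda>\<omega>. f (Y \<omega>)) -` A \<inter> space M | A. A \<in> sets T'} \<subseteq> {Y -` A \<inter> space M | A. A \<in> sets T}"
  proof safe
    fix A assume A: "A \<in> sets T'"
    have "(\<lambda>\<omega>. f (Y \<omega>)) -` A \<inter> space M = Y -` (f -` A \<inter> space T) \<inter> space M"
      using rvs(2) by (auto simp: measurable_def)
    moreover have "f -` A \<inter> space T \<in> sets T" using f A by (rule measurable_sets)
    ultimately show "\<exists>A'. (\<lambda>\<omega>. f (Y \<omega>)) -` A \<inter> space M = Y -` A' \<inter> space M \<and> A' \<in> sets T" by blast
  qed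
  have "indep_set {X -` A \<inter> space M | A. A \<in> sets S} {(\<lambda>\<omega>. f (Y \<omega>)) -` A \<inter> space M | A. A \<in> sets T'}"
    unfolding indep_set_def
    by (rule indep_sets_mono_sets[OF ind[unfolded indep_set_def]]) (use sub in \<open>auto split: bool.split\<close>)
  moreover have "(\<lambda>\<omega>. f (Y \<omega>)) \<in> measurable M T'" using rvs f by measurable
  ultimately show ?thesis using rvs unfolding indep_rvs_def by auto
qed

lemma upset_borel:
  fixes U :: "real set"
  assumes "\<And>x x'. x \<in> U \<Longrightarrow> x \<le> x' \<Longrightarrow> x' \<in> U"
  shows "U \<in> sets borel"
  by (rule real_interval_borel_measurable) (use assms in \<open>auto simp: is_interval_1\<close>)

lemma downset_borel:
  fixes U :: "real set"
  assumes "\<And>x x'. x \<in> U \<Longrightarrow> x' \<le> x \<Longrightarrow> x' \<in> U"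
  shows "U \<in> sets borel"
  by (rule real_interval_borel_measurable) (use assms in \<open>auto simp: is_interval_1\<close>)

lemma Phi_measurable: "Phi \<psi> r \<in> borel_measurable borel"
proof (subst borel_measurable_ereal_iff_Iio, intro allI)
  fix a
  have anti: "Phi \<psi> r x' \<le> Phi \<psi> r x" if "x \<le> x'" for x x'
    unfolding Phi_def by (intro Inf_superset_mono image_mono) (use that in auto)
  have "Phi \<psi> r -` {..<a} \<in> sets borel"
    by (rule upset_borel) (auto dest: anti intro: le_less_trans)
  then show "Phi \<psi> r -` {..<a} \<inter> space borel \<in> sets borel" by simp
qed

lemma Phi'_measurable: "Phi' \<psi> r \<in> borel_measurable borel"
proof (subst borel_measurable_ereal_iff_Iio, intro allI)
  fix a
  have mo: "Phi' \<psi> r x' \<le> Phi' \<psi> r x" if "x' \<le> x" for x x'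
    unfolding Phi'_def by (intro Sup_subset_mono image_mono) (use that in auto)
  have "Phi' \<psi> r -` {..<a} \<in> sets borel"
    by (rule downset_borel) (auto dest: mo intro: le_less_trans)
  then show "Phi' \<psi> r -` {..<a} \<inter> space borel \<in> sets borel" by simp
qed

lemma countable_Cset: "countable (Cset \<psi>)"
  unfolding Cset_def by (intro countable_image countable_SIGMA countable_rat)

lemma dy_rescale:
  assumes "n \<le> N" shows "real i / 2^n = real (i * 2^(N-n)) / (2::real)^N"
proof -
  have "(2::real)^N = 2^n * 2^(N-n)" using assms by (metis le_add_diff_inverse power_add)
  then show ?thesis by simp
qed

lemma dy_common:
  assumes "finite F" "F \<subseteq> Dy"
  shows "\<exists>N. \<forall>x\<in>F. \<exists>i::nat. x = real i / 2^N"
  using assms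
proof (induction F rule: finite_induct)
  case empty then show ?case by auto
next
  case (insert x F)
  then obtain N where N: "\<forall>x\<in>F. \<exists>i::nat. x = real i / 2^N" by auto
  from insert obtain j n where x: "x = real j / 2^n" unfolding Dy_def by auto
  define N' where "N' = max n N"
  have "\<forall>y\<in>insert x F. \<exists>i::nat. y = real i / 2^N'"
  proof
    fix y assume "y \<in> insert x F"
    then show "\<exists>i::nat. y = real i / 2^N'"
    proof
      assume "y = x" then show ?thesis using x dy_rescale[of n N' j] unfolding N'_def
        by (intro exI[of _ "j * 2^(max n N - n)"]) simp
    next
      assume "y \<in> F" then obtain i where "y = real i / 2^N" using N by auto
      then show ?thesis using dy_rescale[of N N' i] unfolding N'_def
        by (intro exI[of _ "i * 2^(max n N - N)"]) simp
    qed
  qed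
  then show ?case by blast
qed

lemma supeq_cong: "(\<And>t. t \<in> D \<Longrightarrow> F t = G t) \<Longrightarrow> supeq D F c = supeq D G c"
  unfolding supeq_def by auto

lemma bm_block_indep:
  assumes bm: "std_brownian_motion M B" and aD: "a \<in> Dy" and a0: "0 < a" and D: "D \<subseteq> Dy \<inter> {a..}"
  shows "indep_rvs M (Pi\<^sub>M D (\<lambda>_. borel)) (\<lambda>\<omega>. \<lambda>t\<in>D. B t \<omega> - B a \<omega>) borel (B a)"
proof -
  interpret prob_space M using bm_prob[OF bm] .
  define U where "U = (\<lambda>\<omega>. \<lambda>t\<in>D. B t \<omega> - B a \<omega>)"
  have Bm: "B t \<in> borel_measurable M" if "t \<in> D" for t using that D a0 bm_meas[OF bm, of t] by auto
  have Bam: "B a \<in> borel_measurable M" using bm_meas[OF bm, of a] a0 by auto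
  have Um: "U \<in> measurable M (Pi\<^sub>M D (\<lambda>_. borel))"
    unfolding U_def by (intro measurable_restrict borel_measurable_diff Bm Bam)
  define G where "G = {U -` A \<inter> space M | A. A \<in> prod_algebra D (\<lambda>_. borel)}"
  define C1 where "C1 = {B a -` A \<inter> space M | A. A \<in> sets (borel :: real measure)}"
  have core: "prob (g \<inter> s) = prob g * prob s" if g: "g \<in> G" and s: "s \<in> C1" for g s
  proof -
    obtain P where gP: "g = U -` P \<inter> space M" and P: "P \<in> prod_algebra D (\<lambda>_. borel)" using g unfolding G_def by auto
    obtain A0 where sA: "s = B a -` A0 \<inter> space M" and A0: "A0 \<in> sets (borel :: real measure)" using s unfolding C1_def by auto
    obtain J E where PJ: "P = prod_emb D (\<lambda>_. borel) J (\<Pi>\<^sub>E j\<in>J. E j)" and J: "finite J" "J \<subseteq> D"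
      and E: "\<And>i. i \<in> J \<Longrightarrow> E i \<in> sets (borel :: real measure)"
      using prod_algebraE[OF P] by metis
    have gset: "g = {\<omega>\<in>space M. \<forall>j\<in>J. B j \<omega> - B a \<omega> \<in> E j}"
      unfolding gP PJ using J(2) by (auto simp: prod_emb_iff U_def PiE_iff extensional_def) (metis (no_types, lifting) subsetD)
    obtain N where N: "\<forall>x\<in>insert a J. \<exists>i::nat. x = real i / 2^N"
      using dy_common[of "insert a J"] J aD D by auto
    then obtain ia where ia: "a = real ia / 2^N" by auto
    define l where "l j = nat \<lfloor>(j - a) * 2^N\<rfloor>" for j
    have lj: "j = a + real (l j) / 2^N" if jJ: "j \<in> J" for j
    proof -
      obtain i where i: "j = real i / 2^N" using N jJ by auto
      have "a \<le> j" using jJ J D by auto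
      then have "ia \<le> i" using i ia by (simp add: divide_le_cancel)
      have "(j - a) * 2^N = real (i - ia)" using i ia \<open>ia \<le> i\<close> by (simp add: field_simps of_nat_diff)
      then have "real (l j) = (j - a) * 2^N" unfolding l_def by simp
      then show ?thesis by (simp add: field_simps)
    qed
    define L where "L = (\<Sum>j\<in>J. l j)"
    have lL: "l j \<le> L" if "j \<in> J" for j unfolding L_def using J(1) that by (intro member_le_sum) auto
    define ts where "ts i = (if i = 0 then 0 else a + real (i - 1) / 2^N)" for i
    have ts0: "0 \<le> ts 0" unfolding ts_def by simp
    have tsinc: "ts i < ts (Suc i)" for i using a0 unfolding ts_def by (auto simp: divide_strict_right_mono)
    define \<xi> where "\<xi> i \<omega> = B (ts (Suc i)) \<omega> - B (ts i) \<omega>" for i \<omega>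
    have ind: "indep_vars (\<lambda>_. borel) \<xi> {..<Suc L}"
      unfolding \<xi>_def by (rule bm_indep[OF bm ts0 tsinc])
    have ind2: "indep_var (Pi\<^sub>M {0} (\<lambda>_. borel)) (\<lambda>\<omega>. restrict (\<lambda>i. \<xi> i \<omega>) {0})
        (Pi\<^sub>M {1..L} (\<lambda>_. borel)) (\<lambda>\<omega>. restrict (\<lambda>i. \<xi> i \<omega>) {1..L})"
      by (rule indep_var_restrict[OF ind]) auto
    have tele: "(\<Sum>i<l j. restrict (\<lambda>i. \<xi> i \<omega>) {1..L} (Suc i)) = B j \<omega> - B a \<omega>" if "j \<in> J" for j \<omega>
    proof -
      have "(\<Sum>i<l j. restrict (\<lambda>i. \<xi> i \<omega>) {1..L} (Suc i)) = (\<Sum>i<l j. B (a + real (Suc i) / 2^N) \<omega> - B (a + real i / 2^N) \<omega>)"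
        using lL[OF that] by (intro sum.cong) (auto simp: \<xi>_def ts_def)
      also have "\<dots> = B (a + real (l j) / 2^N) \<omega> - B (a + real 0 / 2^N) \<omega>"
        by (rule sum_lessThan_telescope)
      finally show ?thesis using lj[OF that] by simp
    qed
    define Xa where "Xa = {f \<in> space (Pi\<^sub>M {0::nat} (\<lambda>_. borel)). f 0 \<in> A0}"
    define Xb where "Xb = {f \<in> space (Pi\<^sub>M {1..L} (\<lambda>_. borel)). \<forall>j\<in>J. (\<Sum>i<l j. f (Suc i)) \<in> E j}"
    have Xa: "Xa \<in> sets (Pi\<^sub>M {0::nat} (\<lambda>_. borel))"
    proof -
      have "Xa = (\<lambda>f. f 0) -` A0 \<inter> space (Pi\<^sub>M {0::nat} (\<lambda>_. borel))" unfolding Xa_def by auto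
      also have "\<dots> \<in> sets (Pi\<^sub>M {0::nat} (\<lambda>_. borel))"
      proof (rule measurable_sets[OF _ A0])
        show "(\<lambda>f. f 0) \<in> measurable (Pi\<^sub>M {0::nat} (\<lambda>_. borel)) borel"
          using measurable_component_singleton[of 0 "{0::nat}" "\<lambda>_. borel"] by simp
      qed
      finally show ?thesis .
    qed
    have Xb: "Xb \<in> sets (Pi\<^sub>M {1..L} (\<lambda>_. borel))"
      unfolding Xb_def
    proof (rule sets.sets_Collect_finite_All[OF _ J(1)])
      fix j assume j: "j \<in> J"
      have gm: "(\<lambda>f::nat\<Rightarrow>real. \<Sum>i<l j. f (Suc i)) \<in> borel_measurable (Pi\<^sub>M {1..L} (\<lambda>_. borel))"
      proof (rule borel_measurable_sum[where f="\<lambda>i x. x (Suc i)"])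
        fix i assume "i \<in> {..<l j}"
        then have "Suc i \<in> {1..L}" using lL[OF j] by auto
        then show "(\<lambda>f. f (Suc i)) \<in> borel_measurable (Pi\<^sub>M {1..L} (\<lambda>_. borel))"
          using measurable_component_singleton[of "Suc i" "{1..L}" "\<lambda>_. borel"] by simp
      qed
      have "{f \<in> space (Pi\<^sub>M {1..L} (\<lambda>_. borel)). (\<Sum>i<l j. f (Suc i)) \<in> E j} =
          (\<lambda>f. \<Sum>i<l j. f (Suc i)) -` E j \<inter> space (Pi\<^sub>M {1..L} (\<lambda>_. borel))" by auto
      also have "\<dots> \<in> sets (Pi\<^sub>M {1..L} (\<lambda>_. borel))" by (rule measurable_sets[OF gm E[OF j]])
      finally show "{f \<in> space (Pi\<^sub>M {1..L} (\<lambda>_. borel)). (\<Sum>i<l j. f (Suc i)) \<in> E j} \<in> sets (Pi\<^sub>M {1..L} (\<lambda>_. borel))" .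
    qed
    have x0: "\<xi> 0 \<omega> = B a \<omega>" if "\<omega> \<in> space M" for \<omega>
      using bm_zero[OF bm that] unfolding \<xi>_def ts_def by simp
    have eqa: "(\<lambda>\<omega>. restrict (\<lambda>i. \<xi> i \<omega>) {0}) -` Xa \<inter> space M = s"
      unfolding sA Xa_def using x0 by (auto simp: space_PiM PiE_iff)
    have eqb: "(\<lambda>\<omega>. restrict (\<lambda>i. \<xi> i \<omega>) {1..L}) -` Xb \<inter> space M = g"
      unfolding gset Xb_def using tele by (auto simp: space_PiM PiE_iff)
    have eqab: "(\<lambda>\<omega>. (restrict (\<lambda>i. \<xi> i \<omega>) {0}, restrict (\<lambda>i. \<xi> i \<omega>) {1..L})) -` (Xa \<times> Xb) \<inter> space M = s \<inter> g"
      using eqa eqb by auto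
    have "prob (s \<inter> g) = prob s * prob g"
      using indep_varD[OF ind2 Xa Xb] unfolding eqa eqb eqab .
    then show ?thesis by (simp add: Int_commute mult.commute)
  qed
  have Gev: "G \<subseteq> events"
    unfolding G_def using Um by (auto intro!: measurable_sets simp: sets_PiM intro: sigma_sets.Basic)
  have C1ev: "C1 \<subseteq> events" unfolding C1_def using Bam by auto
  have "indep_set G C1" unfolding indep_sets2_eq using Gev C1ev core by auto
  moreover have "Int_stable G"
  proof (rule Int_stableI)
    fix g1 g2 assume "g1 \<in> G" "g2 \<in> G"
    then obtain P1 P2 where "g1 = U -` P1 \<inter> space M" "g2 = U -` P2 \<inter> space M"
      "P1 \<in> prod_algebra D (\<lambda>_. borel)" "P2 \<in> prod_algebra D (\<lambda>_. borel)" unfolding G_def by auto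
    moreover have "P1 \<inter> P2 \<in> prod_algebra D (\<lambda>_. borel)"
      using Int_stable_prod_algebra calculation(3,4) unfolding Int_stable_def by blast
    ultimately show "g1 \<inter> g2 \<in> G" unfolding G_def by (intro CollectI exI[of _ "P1 \<inter> P2"]) auto
  qed
  moreover have "Int_stable C1"
  proof (rule Int_stableI)
    fix g1 g2 assume "g1 \<in> C1" "g2 \<in> C1"
    then obtain P1 P2 where "g1 = B a -` P1 \<inter> space M" "g2 = B a -` P2 \<inter> space M"
      "P1 \<in> sets borel" "P2 \<in> sets borel" unfolding C1_def by auto
    then show "g1 \<inter> g2 \<in> C1" unfolding C1_def by (intro CollectI exI[of _ "P1 \<inter> P2"]) auto
  qed
  ultimately have ind: "indep_set (sigma_sets (space M) G) (sigma_sets (space M) C1)"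
    by (rule indep_set_sigma_sets)
  have eq2: "{U -` A \<inter> space M | A. A \<in> sets (Pi\<^sub>M D (\<lambda>_. borel))} = sigma_sets (space M) G"
    unfolding sets_PiM G_def
    by (rule sigma_sets_vimage_commute) (use Um in \<open>auto simp: measurable_def space_PiM\<close>)
  have "indep_set {U -` A \<inter> space M | A. A \<in> sets (Pi\<^sub>M D (\<lambda>_. borel))} C1"
    unfolding indep_set_def eq2
    by (rule indep_sets_mono_sets[OF ind[unfolded indep_set_def]]) (auto split: bool.split intro: sigma_sets.Basic)
  then show ?thesis unfolding indep_rvs_def U_def[symmetric] C1_def using Um Bam by auto
qed

lemma supeq_subsingleton:
  assumes "supeq D (\<lambda>t. x1 + f t) c" "supeq D (\<lambda>t. x2 + f t) c"
  shows "x1 = x2"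
proof (rule ccontr)
  assume ne: "x1 \<noteq> x2"
  have *: False if h1: "supeq D (\<lambda>t. u + f t) c" and h2: "supeq D (\<lambda>t. w + f t) c" and h3: "u < w" for u w
  proof -
    obtain n where n: "inverse (real (Suc n)) < w - u" using reals_Archimedean[of "w - u"] h3 by auto
    then have n': "1 / (real n + 1) < w - u" by (simp add: inverse_eq_divide add.commute)
    obtain t where t: "t \<in> D" "c - 1/(real n+1) < u + f t" using h1 unfolding supeq_def by auto
    have "w + f t \<le> c" using h2 t(1) unfolding supeq_def by auto
    with t n' show False by linarith
  qed
  show False using ne assms *[of x1 x2] *[of x2 x1] by linarith
qed

lemma bm_block_null:
  assumes bm: "std_brownian_motion M B" and aD: "a \<in> Dy" and a0: "0 < a"
  shows "AE \<omega> in M. \<not> supeq (Dy \<inter> {a..b}) (\<lambda>t. B t \<omega>) c"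
proof -
  interpret prob_space M using bm_prob[OF bm] .
  define D where "D = Dy \<inter> {a..b}"
  define U where "U = (\<lambda>\<omega>. \<lambda>t\<in>D. B t \<omega> - B a \<omega>)"
  have I: "indep_rvs M (Pi\<^sub>M D (\<lambda>_. borel)) U borel (B a)"
    unfolding U_def by (rule bm_block_indep[OF bm aD a0]) (auto simp: D_def)
  have Um: "U \<in> measurable M (Pi\<^sub>M D (\<lambda>_. borel))" and Bam: "B a \<in> borel_measurable M"
    using I unfolding indep_rvs_def by auto
  have cD: "countable D" unfolding D_def using countable_Dy by (rule countable_subset[rotated]) auto
  define E where "E = {p \<in> space (Pi\<^sub>M D (\<lambda>_. borel) \<Otimes>\<^sub>M borel). supeq D (\<lambda>t. snd p + fst p t) c}"
  have Es: "E \<in> sets (Pi\<^sub>M D (\<lambda>_. borel) \<Otimes>\<^sub>M borel)"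
    unfolding E_def
  proof (rule supeq_sets[OF cD])
    fix t assume t: "t \<in> D"
    have "(\<lambda>f. f t) \<in> borel_measurable (Pi\<^sub>M D (\<lambda>_. borel))"
      using measurable_component_singleton[OF t, of "\<lambda>_. borel"] by simp
    then show "(\<lambda>p. snd p + fst p t) \<in> borel_measurable (Pi\<^sub>M D (\<lambda>_. borel) \<Otimes>\<^sub>M (borel :: real measure))"
      by measurable
  qed
  define N where "N = {\<omega>\<in>space M. (U \<omega>, B a \<omega>) \<in> E}"
  have Nev: "N \<in> events" unfolding N_def using Um Bam Es by measurable
  show ?thesis
  proof (rule AE_I[OF _ _ Nev])
    show "{\<omega> \<in> space M. \<not> \<not> supeq (Dy \<inter> {a..b}) (\<lambda>t. B t \<omega>) c} \<subseteq> N"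
    proof
      fix \<omega> assume "\<omega> \<in> {\<omega> \<in> space M. \<not> \<not> supeq (Dy \<inter> {a..b}) (\<lambda>t. B t \<omega>) c}"
      then have \<omega>: "\<omega> \<in> space M" "supeq (Dy \<inter> {a..b}) (\<lambda>t. B t \<omega>) c" by auto
      have "supeq D (\<lambda>t. B a \<omega> + U \<omega> t) c"
        using \<omega>(2) unfolding D_def[symmetric] by (subst supeq_cong[where G="\<lambda>t. B t \<omega>"]) (auto simp: U_def)
      moreover have "U \<omega> \<in> space (Pi\<^sub>M D (\<lambda>_. borel))" using Um \<omega>(1) by (auto simp: measurable_def)
      ultimately show "\<omega> \<in> N" unfolding N_def E_def using \<omega>(1) by (auto simp: space_pair_measure)
    qed
    show "emeasure M N = 0" unfolding N_def
    proof (rule indep_rvs_null[OF prob_space_axioms I Es])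
      fix f :: "real \<Rightarrow> real" assume f: "f \<in> space (Pi\<^sub>M D (\<lambda>_. borel))"
      show "emeasure (distr M borel (B a)) (Pair f -` E) = 0"
      proof (cases "Pair f -` E = {}")
        case True then show ?thesis by simp
      next
        case False
        then obtain x1 where x1: "x1 \<in> Pair f -` E" by auto
        have sub: "Pair f -` E \<subseteq> {x1}"
        proof
          fix x2 assume "x2 \<in> Pair f -` E"
          then show "x2 \<in> {x1}" using x1 supeq_subsingleton[of D x1 f c x2] unfolding E_def by auto
        qed
        have "emeasure (distr M borel (B a)) (Pair f -` E) \<le> emeasure (distr M borel (B a)) {x1}"
          by (rule emeasure_mono[OF sub]) simp
        also have "\<dots> = emeasure M {\<omega>\<in>space M. B a \<omega> = x1}"
          using Bam by (subst emeasure_distr) (auto intro!: arg_cong[where f="emeasure M"])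
        also have "\<dots> = 0" by (rule bm_point_null[OF bm a0])
        finally show ?thesis by simp
      qed
    qed
  qed
qed

lemma bm_half:
  assumes bm: "std_brownian_motion M B" and t: "0 < t"
  shows "measure M {\<omega>\<in>space M. B t \<omega> \<le> 0} \<le> 1/2"
proof -
  interpret prob_space M using bm_prob[OF bm] .
  define W where "W = (\<lambda>\<omega>. B t \<omega> - B 0 \<omega>)"
  have d: "distributed M lborel W (\<lambda>x. ennreal (normal_density 0 (sqrt t) x))"
    unfolding W_def using bm_distr[OF bm _ t] by simp
  have d': "distributed M lborel (\<lambda>x. 0 + (-1) * W x) (normal_density (0 + (-1) * 0) (\<bar>-1\<bar> * sqrt t))"
    by (rule normal_density_affine[OF d]) (use t in auto)
  then have d'': "distributed M lborel (\<lambda>x. - W x) (\<lambda>x. ennreal (normal_density 0 (sqrt t) x))" by simp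
  have Wm: "W \<in> borel_measurable M" using d by (simp add: distributed_def)
  have eqd: "distr M lborel W = distr M lborel (\<lambda>x. - W x)"
    using distributed_distr_eq_density[OF d] distributed_distr_eq_density[OF d''] by simp
  have Wm': "W \<in> measurable M lborel" "(\<lambda>x. - W x) \<in> measurable M lborel" using Wm by auto
  have "measure M {\<omega>\<in>space M. W \<omega> \<le> 0} = measure (distr M lborel W) {..0}"
    by (subst measure_distr[OF Wm'(1)]) (auto intro!: arg_cong[where f="measure M"])
  also have "\<dots> = measure (distr M lborel (\<lambda>x. - W x)) {..0}" by (simp add: eqd)
  also have "\<dots> = measure M {\<omega>\<in>space M. 0 \<le> W \<omega>}"
    by (subst measure_distr[OF Wm'(2)]) (auto intro!: arg_cong[where f="measure M"])
  finally have sym: "prob {\<omega>\<in>space M. W \<omega> \<le> 0} = prob {\<omega>\<in>space M. 0 \<le> W \<omega>}" .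
  have e1: "{\<omega>\<in>space M. W \<omega> \<le> 0} \<in> events" "{\<omega>\<in>space M. 0 < W \<omega>} \<in> events"
    "{\<omega>\<in>space M. W \<omega> = 0} \<in> events" "{\<omega>\<in>space M. 0 \<le> W \<omega>} \<in> events" using Wm by measurable
  have z: "prob {\<omega>\<in>space M. W \<omega> = 0} = 0"
  proof -
    have "{\<omega>\<in>space M. W \<omega> = 0} = {\<omega>\<in>space M. B t \<omega> = 0}" using bm_zero[OF bm] unfolding W_def by auto
    then show ?thesis using bm_point_null[OF bm t, of 0] by (simp add: measure_def)
  qed
  have "prob {\<omega>\<in>space M. 0 \<le> W \<omega>} \<le> prob ({\<omega>\<in>space M. 0 < W \<omega>} \<union> {\<omega>\<in>space M. W \<omega> = 0})"
    by (rule finite_measure_mono) (use e1 in auto)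
  also have "\<dots> \<le> prob {\<omega>\<in>space M. 0 < W \<omega>} + prob {\<omega>\<in>space M. W \<omega> = 0}"
    by (rule measure_Un_le) (use e1 in auto)
  finally have le1: "prob {\<omega>\<in>space M. 0 \<le> W \<omega>} \<le> prob {\<omega>\<in>space M. 0 < W \<omega>}" using z by simp
  have "prob {\<omega>\<in>space M. 0 < W \<omega>} = prob (space M - {\<omega>\<in>space M. W \<omega> \<le> 0})"
    by (intro arg_cong[where f=prob]) auto
  also have "\<dots> = 1 - prob {\<omega>\<in>space M. W \<omega> \<le> 0}" by (rule prob_compl[OF e1(1)])
  finally have "prob {\<omega>\<in>space M. W \<omega> \<le> 0} \<le> 1/2" using sym le1 by linarith
  moreover have "{\<omega>\<in>space M. W \<omega> \<le> 0} = {\<omega>\<in>space M. B t \<omega> \<le> 0}" using bm_zero[OF bm] unfolding W_def by auto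
  ultimately show ?thesis by simp
qed

lemma indep_vars_reindex:
  assumes P: "prob_space M" and ind: "prob_space.indep_vars M (\<lambda>_. N) X I" and f: "bij_betw f J I"
  shows "prob_space.indep_vars M (\<lambda>_. N) (\<lambda>j. X (f j)) J"
proof -
  interpret prob_space M by fact
  have inj: "inj_on f J" and fJ: "f ` J = I" using f by (auto simp: bij_betw_def)
  have rv: "\<forall>i\<in>I. random_variable N (X i)" and isd: "indep_sets (\<lambda>i. {X i -` A \<inter> space M |A. A \<in> sets N}) I"
    using ind unfolding indep_vars_def2 by auto
  show ?thesis unfolding indep_vars_def2
  proof (intro conjI ballI)
    fix j assume "j \<in> J" then show "random_variable N (X (f j))" using rv fJ by auto
  next
    show "indep_sets (\<lambda>j. {X (f j) -` A \<inter> space M |A. A \<in> sets N}) J"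
      unfolding indep_sets_def
    proof (intro conjI ballI allI impI)
      fix j assume "j \<in> J" then show "{X (f j) -` A \<inter> space M |A. A \<in> sets N} \<subseteq> events"
        using isd fJ unfolding indep_sets_def by auto
    next
      fix K A assume K: "K \<subseteq> J" "K \<noteq> {}" "finite K" and A: "A \<in> (\<Pi> j\<in>K. {X (f j) -` A \<inter> space M |A. A \<in> sets N})"
      define A' where "A' i = A (the_inv_into J f i)" for i
      have inv: "the_inv_into J f (f k) = k" if "k \<in> K" for k using the_inv_into_f_f[OF inj] K that by auto
      have A': "A' \<in> (\<Pi> i\<in>f ` K. {X i -` A \<inter> space M |A. A \<in> sets N})"
      proof (rule Pi_I)
        fix i assume "i \<in> f ` K"
        then obtain k where k: "k \<in> K" "i = f k" by auto
        have "A k \<in> {X (f k) -` A \<inter> space M |A. A \<in> sets N}" using A k(1) by (rule Pi_mem)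
        then show "A' i \<in> {X i -` A \<inter> space M |A. A \<in> sets N}" using k inv[OF k(1)] unfolding A'_def by simp
      qed
      have "prob (\<Inter>i\<in>f ` K. A' i) = (\<Prod>i\<in>f ` K. prob (A' i))"
      proof (rule indep_setsD[OF isd])
        show "f ` K \<subseteq> I" using K(1) fJ by auto
        show "f ` K \<noteq> {}" using K(2) by simp
        show "finite (f ` K)" using K(3) by simp
        show "\<forall>j\<in>f ` K. A' j \<in> {X j -` A \<inter> space M |A. A \<in> sets N}" using A' by blast
      qed
      moreover have "(\<Inter>i\<in>f ` K. A' i) = (\<Inter>k\<in>K. A k)"
      proof -
        have "(\<Inter>i\<in>f ` K. A' i) = (\<Inter>k\<in>K. A' (f k))" by simp
        also have "\<dots> = (\<Inter>k\<in>K. A k)" by (intro INF_cong) (auto simp: A'_def inv)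
        finally show ?thesis .
      qed
      moreover have "(\<Prod>i\<in>f ` K. prob (A' i)) = (\<Prod>k\<in>K. prob (A k))"
      proof -
        have "inj_on f K" using inj K(1) by (rule inj_on_subset)
        then have "(\<Prod>i\<in>f ` K. prob (A' i)) = (\<Prod>k\<in>K. prob (A' (f k)))" by (simp add: prod.reindex)
        also have "\<dots> = (\<Prod>k\<in>K. prob (A k))" by (intro prod.cong) (auto simp: A'_def inv)
        finally show ?thesis .
      qed
      ultimately show "prob (\<Inter>k\<in>K. A k) = (\<Prod>k\<in>K. prob (A k))" by simp
    qed
  qed
qed

lemma sum_tele_shift: "(\<Sum>j\<in>{k..<k+N}. f j - f (Suc j)) = f k - (f (k+N) :: real)"
  by (induction N) (auto simp: algebra_simps)

lemma bm_nonpos_null: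
  assumes bm: "std_brownian_motion M B" and q: "0 < q"
  shows "AE \<omega> in M. \<not> (\<forall>k::nat. B (q/2^k) \<omega> \<le> 0)"
proof -
  interpret prob_space M using bm_prob[OF bm] .
  define \<rho> where "\<rho> k = q / 2^k" for k :: nat
  have \<rho>pos: "0 < \<rho> k" for k unfolding \<rho>_def using q by simp
  define \<xi> where "\<xi> k \<omega> = B (\<rho> k) \<omega> - B (\<rho> (Suc k)) \<omega>" for k \<omega>
  have Bm: "(\<lambda>\<omega>. B (\<rho> k) \<omega>) \<in> borel_measurable M" for k using bm_meas[OF bm] \<rho>pos[of k] by auto
  have \<xi>m: "\<xi> k \<in> borel_measurable M" for k unfolding \<xi>_def using Bm by measurable
  have indn: "indep_vars (\<lambda>_. borel) \<xi> {..<n}" for n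
  proof -
    define ts where "ts i = q / 2^(n - i)" for i
    have "indep_vars (\<lambda>_. borel) (\<lambda>i \<omega>. B (ts (Suc i)) \<omega> - B (ts i) \<omega>) {..<n}"
    proof (rule bm_indep[OF bm])
      show "0 \<le> ts 0" unfolding ts_def using q by simp
      fix i assume "i < n"
      then have "(2::real)^(n - Suc i) < 2^(n - i)" by (intro power_strict_increasing) auto
      then show "ts i < ts (Suc i)" unfolding ts_def using q by (intro divide_strict_left_mono) auto
    qed
    moreover have bij: "bij_betw (\<lambda>j. n - 1 - j) {..<n} {..<n}"
      by (rule bij_betw_byWitness[where f'="\<lambda>j. n - 1 - j"]) auto
    ultimately have "indep_vars (\<lambda>_. borel) (\<lambda>j. (\<lambda>i \<omega>. B (ts (Suc i)) \<omega> - B (ts i) \<omega>) (n - 1 - j)) {..<n}"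
      by (rule indep_vars_reindex[OF prob_space_axioms])
    moreover have "(\<lambda>i \<omega>. B (ts (Suc i)) \<omega> - B (ts i) \<omega>) (n - 1 - j) = \<xi> j" if "j \<in> {..<n}" for j
    proof -
      have "Suc (n - 1 - j) = n - j" "n - (n - j) = j" "n - (n - 1 - j) = Suc j" using that by auto
      then show ?thesis unfolding ts_def \<xi>_def \<rho>_def by (auto simp: fun_eq_iff)
    qed
    ultimately show ?thesis using indep_vars_cong[of "{..<n}" "{..<n}"] by (metis (no_types, lifting))
  qed
  have indU: "indep_vars (\<lambda>_. borel) \<xi> UNIV"
    unfolding indep_vars_def2
  proof (intro conjI ballI)
    fix i show "random_variable borel (\<xi> i)" using \<xi>m by simp
  next
    show "indep_sets (\<lambda>i. {\<xi> i -` A \<inter> space M |A. A \<in> sets borel}) UNIV"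
      unfolding indep_sets_finite_index_sets[of _ UNIV]
    proof (intro allI impI)
      fix J :: "nat set" assume J: "J \<subseteq> UNIV" "J \<noteq> {}" "finite J"
      then have "J \<subseteq> {..<Suc (Max J)}" by (auto simp: le_imp_less_Suc)
      moreover have "indep_sets (\<lambda>i. {\<xi> i -` A \<inter> space M |A. A \<in> sets borel}) {..<Suc (Max J)}"
        using indn unfolding indep_vars_def2 by auto
      ultimately show "indep_sets (\<lambda>i. {\<xi> i -` A \<inter> space M |A. A \<in> sets borel}) J"
        by (rule indep_sets_mono_index)
    qed
  qed
  define A where "A i = sigma_sets (space M) {\<xi> i -` S \<inter> space M | S. S \<in> sets (borel::real measure)}" for i
  have indA: "indep_sets A UNIV" using indU unfolding indep_vars_def A_def by simp
  have Asub: "{\<xi> i -` S \<inter> space M | S. S \<in> sets (borel::real measure)} \<subseteq> Pow (space M)" for i by auto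
  have saA: "sigma_algebra (space M) (A i)" for i unfolding A_def by (rule sigma_algebra_sigma_sets[OF Asub])
  define Xev where "Xev = {\<omega>\<in>space M. \<exists>K. \<forall>k. K \<le> k \<longrightarrow> B (\<rho> k) \<omega> \<le> 0}"
  have tail: "Xev \<in> tail_events A"
    unfolding tail_events_def
  proof (rule InterI, safe)
    fix n :: nat
    define G where "G = \<Union> (A ` {n..})"
    have Gsub: "G \<subseteq> Pow (space M)" unfolding G_def A_def using sigma_sets_into_sp[OF Asub] by blast
    define Nn where "Nn = sigma (space M) G"
    have spN: "space Nn = space M" and setsN: "sets Nn = sigma_sets (space M) G"
      unfolding Nn_def using Gsub by (auto simp: space_measure_of sets_measure_of)
    have \<xi>N: "\<xi> j \<in> borel_measurable Nn" if "n \<le> j" for j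
    proof (rule measurableI)
      fix S :: "real set" assume "S \<in> sets borel"
      then have "\<xi> j -` S \<inter> space M \<in> A j" unfolding A_def by (intro sigma_sets.Basic) auto
      then have "\<xi> j -` S \<inter> space M \<in> G" unfolding G_def using that by auto
      then show "\<xi> j -` S \<inter> space Nn \<in> sets Nn" unfolding spN setsN by (rule sigma_sets.Basic)
    qed auto
    have SN: "(\<lambda>\<omega>. B (\<rho> k) \<omega>) \<in> borel_measurable Nn" if "n \<le> k" for k
    proof (rule borel_measurable_LIMSEQ_real[where u="\<lambda>N \<omega>. \<Sum>j\<in>{k..<k+N}. \<xi> j \<omega>"])
      fix \<omega> assume "\<omega> \<in> space Nn"
      then have \<omega>: "\<omega> \<in> space M" using spN by simp
      have eq: "(\<Sum>j\<in>{k..<k+N}. \<xi> j \<omega>) = B (\<rho> k) \<omega> - B (\<rho> (k+N)) \<omega>" for N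
        unfolding \<xi>_def by (rule sum_tele_shift)
      have lim0: "(\<lambda>N. \<rho> (k+N)) \<longlonglongrightarrow> 0"
      proof -
        have "(\<lambda>N. (q/2^k) / 2^N) \<longlonglongrightarrow> 0" by (rule LIMSEQ_divide_realpow_zero) simp
        moreover have "\<rho> (k+N) = (q/2^k) / 2^N" for N unfolding \<rho>_def by (simp add: power_add)
        ultimately show ?thesis by simp
      qed
      have "(\<lambda>N. B (\<rho> (k+N)) \<omega>) \<longlonglongrightarrow> B 0 \<omega>"
        by (rule continuous_on_tendsto_compose[OF bm_cont[OF bm \<omega>] lim0]) (use \<rho>pos in \<open>auto intro!: always_eventually less_imp_le\<close>)
      then have "(\<lambda>N. B (\<rho> k) \<omega> - B (\<rho> (k+N)) \<omega>) \<longlonglongrightarrow> B (\<rho> k) \<omega> - 0"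
        using bm_zero[OF bm \<omega>] by (intro tendsto_diff tendsto_const) auto
      then show "(\<lambda>N. \<Sum>j\<in>{k..<k+N}. \<xi> j \<omega>) \<longlonglongrightarrow> B (\<rho> k) \<omega>" unfolding eq by simp
    next
      fix N show "(\<lambda>\<omega>. \<Sum>j\<in>{k..<k+N}. \<xi> j \<omega>) \<in> borel_measurable Nn"
        by (rule borel_measurable_sum) (use \<xi>N that in auto)
    qed
    have "Xev = {\<omega>\<in>space Nn. \<exists>K::nat. \<forall>k::nat. n \<le> k \<longrightarrow> K \<le> k \<longrightarrow> B (\<rho> k) \<omega> \<le> 0}"
      unfolding Xev_def spN
    proof (intro Collect_cong conj_cong refl iffI)
      fix \<omega> assume "\<exists>K. \<forall>k. n \<le> k \<longrightarrow> K \<le> k \<longrightarrow> B (\<rho> k) \<omega> \<le> 0"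
      then obtain K where "\<forall>k. n \<le> k \<longrightarrow> K \<le> k \<longrightarrow> B (\<rho> k) \<omega> \<le> 0" by auto
      then show "\<exists>K. \<forall>k. K \<le> k \<longrightarrow> B (\<rho> k) \<omega> \<le> 0" by (intro exI[of _ "max n K"]) auto
    qed auto
    also have "\<dots> \<in> sets Nn"
    proof (intro sets.sets_Collect_countable_Ex sets.sets_Collect_countable_All)
      fix K k :: nat
      show "{\<omega>\<in>space Nn. n \<le> k \<longrightarrow> K \<le> k \<longrightarrow> B (\<rho> k) \<omega> \<le> 0} \<in> sets Nn"
      proof (cases "n \<le> k")
        case True
        note [measurable] = SN[OF True]
        show ?thesis by measurable
      qed simp
    qed
    finally show "Xev \<in> sigma_sets (space M) (\<Union> (A ` {n..}))" unfolding setsN G_def .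
  qed
  have Xev_ev: "Xev \<in> events" unfolding Xev_def using Bm by measurable
  have "prob Xev = 0 \<or> prob Xev = 1" by (rule kolmogorov_0_1_law[OF saA indA tail])
  moreover have "prob Xev \<le> 1/2"
  proof -
    define XK where "XK K = {\<omega>\<in>space M. \<forall>k. K \<le> k \<longrightarrow> B (\<rho> k) \<omega> \<le> 0}" for K
    have XKev: "range XK \<subseteq> events" unfolding XK_def using Bm by auto
    have inc: "incseq XK" unfolding XK_def incseq_def by auto
    have un: "(\<Union>K. XK K) = Xev" unfolding XK_def Xev_def by auto
    have lim: "(\<lambda>K. prob (XK K)) \<longlonglongrightarrow> prob Xev"
      using finite_Lim_measure_incseq[OF XKev inc] unfolding un .
    have "prob (XK K) \<le> 1/2" for K
    proof -
      have "prob (XK K) \<le> prob {\<omega>\<in>space M. B (\<rho> K) \<omega> \<le> 0}"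
        by (rule finite_measure_mono) (use Bm in \<open>auto simp: XK_def\<close>)
      also have "\<dots> \<le> 1/2" by (rule bm_half[OF bm \<rho>pos])
      finally show ?thesis .
    qed
    then show ?thesis using lim by (intro LIMSEQ_le_const2[OF lim]) auto
  qed
  ultimately have "prob Xev = 0" by simp
  then have "emeasure M Xev = 0" using Xev_ev by (simp add: emeasure_eq_measure)
  show ?thesis
  proof (rule AE_I[OF _ \<open>emeasure M Xev = 0\<close> Xev_ev])
    show "{\<omega> \<in> space M. \<not> \<not> (\<forall>k. B (q / 2 ^ k) \<omega> \<le> 0)} \<subseteq> Xev"
      unfolding Xev_def \<rho>_def by auto
  qed
qed

lemma find_block:
  fixes q t :: real
  assumes q: "0 < q" and t: "q / 2^K < t" "t \<le> q"
  shows "\<exists>k<K. q / 2^Suc k \<le> t \<and> t \<le> q / 2^k"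
  using t
proof (induction K)
  case 0
  then have "q < t" by simp
  then show ?case using 0 by simp
next
  case (Suc K)
  show ?case
  proof (cases "q / 2^K < t")
    case True
    then obtain k where "k<K" "q / 2^Suc k \<le> t \<and> t \<le> q / 2^k" using Suc by auto
    then show ?thesis by (intro exI[of _ k]) auto
  next
    case False
    then show ?thesis using Suc.prems by (intro exI[of _ K]) auto
  qed
qed

lemma sup_decomp:
  assumes cont: "continuous_on {0..} z" and z0: "z 0 = 0" and qD: "q \<in> Dy" and q: "0 < q"
    and sq: "supeq (DD q) z c"
  shows "(\<forall>k::nat. z (q/2^k) \<le> 0) \<or> (\<exists>k::nat. supeq (Dy \<inter> {q/2^Suc k..q/2^k}) z c)"
proof -
  have le: "\<And>t. t \<in> DD q \<Longrightarrow> z t \<le> c" using sq unfolding supeq_def by auto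
  have 0: "0 \<in> DD q" unfolding DD_def using Dy_0 q by auto
  have c0: "0 \<le> c" using le[OF 0] z0 by simp
  have qk: "q/2^k \<in> DD q" for k :: nat
  proof -
    have "q/2^k \<le> q / 1" using q by (intro divide_left_mono) auto
    then show ?thesis unfolding DD_def using Dy_div[OF qD, of k] q by auto
  qed
  show ?thesis
  proof (cases "c = 0")
    case True
    then show ?thesis using le qk by auto
  next
    case False
    then have cpos: "0 < c" using c0 by simp
    have "c/2 > 0" using cpos by simp
    then obtain d where d: "d > 0" "\<And>t. t \<in> {0..} \<Longrightarrow> dist t 0 < d \<Longrightarrow> dist (z t) (z 0) < c/2"
      using cont unfolding continuous_on_iff by (metis atLeast_iff order_refl)
    obtain K :: nat where K: "(1/2::real)^K < d / q" using real_arch_pow_inv[of "d/q" "1/2"] d q by auto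
    have qK: "q / 2^K < d"
    proof -
      have "q / 2^K = q * (1/2)^K" by (simp add: power_divide)
      also have "\<dots> < q * (d / q)" using K q by (intro mult_strict_left_mono) auto
      finally show ?thesis using q by simp
    qed
    show ?thesis
    proof (rule ccontr)
      assume "\<not> ?thesis"
      then have nb: "\<not> supeq (Dy \<inter> {q/2^Suc k..q/2^k}) z c" for k by auto
      have "\<exists>n::nat. \<forall>t\<in>Dy \<inter> {q/2^Suc k..q/2^k}. z t \<le> c - 1/(real n+1)" for k
      proof -
        have sub: "Dy \<inter> {q/2^Suc k..q/2^k} \<subseteq> DD q" using qk[of k] unfolding DD_def
          by (auto intro: order_trans[OF _ divide_left_mono[of "2^k" "2^Suc k" q]] simp: less_imp_le[OF q])
        have "\<forall>t\<in>Dy \<inter> {q/2^Suc k..q/2^k}. z t \<le> c" using le sub by auto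
        then show ?thesis using nb[of k] unfolding supeq_def by (auto simp: not_less)
      qed
      then obtain nk where nk: "\<And>k t. t \<in> Dy \<inter> {q/2^Suc k..q/2^k} \<Longrightarrow> z t \<le> c - 1/(real (nk k)+1)"
        by metis
      define Nn where "Nn = (\<Sum>k<K. nk k) + nat \<lceil>2/c\<rceil>"
      have nkN: "nk k \<le> Nn" if "k < K" for k
        unfolding Nn_def using that by (simp add: member_le_sum trans_le_add1)
      have "2/c \<le> real Nn" unfolding Nn_def by linarith
      then have "2/c < real Nn + 1" by simp
      then have Nc: "1/(real Nn + 1) < c/2" using cpos by (simp add: field_simps)
      obtain t where t: "t \<in> DD q" "c - 1/(real Nn+1) < z t" using sq unfolding supeq_def by auto
      have tq: "0 \<le> t" "t \<le> q" "t \<in> Dy" using t(1) unfolding DD_def by auto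
      have "z t > c/2" using t(2) Nc by linarith
      then have "\<not> dist t 0 < d" using d(2)[of t] tq z0 by (auto simp: dist_real_def)
      then have "d \<le> t" using tq by (auto simp: dist_real_def)
      then have "q/2^K < t" using qK by simp
      then obtain k where k: "k < K" "q / 2^Suc k \<le> t" "t \<le> q / 2^k" using find_block[OF q _ tq(2)] by blast
      have "z t \<le> c - 1/(real (nk k)+1)" using nk[of t k] k tq by auto
      also have "\<dots> \<le> c - 1/(real Nn+1)" using nkN[OF k(1)] by (simp add: frac_le)
      finally show False using t(2) by simp
    qed
  qed
qed

lemma bm_sup_null:
  assumes bm: "std_brownian_motion M B" and qD: "q \<in> Dy" and q: "0 < q"
  shows "AE \<omega> in M. \<not> supeq (DD q) (\<lambda>t. B t \<omega>) c"
proof -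
  interpret prob_space M using bm_prob[OF bm] .
  have A1: "AE \<omega> in M. \<not> (\<forall>k::nat. B (q/2^k) \<omega> \<le> 0)" by (rule bm_nonpos_null[OF bm q])
  have A2: "AE \<omega> in M. \<forall>k::nat. \<not> supeq (Dy \<inter> {q/2^Suc k..q/2^k}) (\<lambda>t. B t \<omega>) c"
  proof (rule AE_all_countable[THEN iffD2], rule allI)
    fix k :: nat
    show "AE \<omega> in M. \<not> supeq (Dy \<inter> {q/2^Suc k..q/2^k}) (\<lambda>t. B t \<omega>) c"
      by (rule bm_block_null[OF bm Dy_div[OF qD]]) (use q in simp)
  qed
  show ?thesis
    using A1 A2 AE_space
  proof eventually_elim
    case (elim \<omega>)
    show ?case
      using sup_decomp[OF bm_cont[OF bm elim(3)] bm_zero[OF bm elim(3)] qD q] elim(1,2) by blast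
  qed
qed

lemma supeq_pred2:
  fixes F :: "real \<Rightarrow> 'a \<Rightarrow> real" and C :: "'a \<Rightarrow> real"
  assumes cD: "countable D" and Fm: "\<And>t. t \<in> D \<Longrightarrow> F t \<in> borel_measurable N"
    and Cm: "C \<in> borel_measurable N"
  shows "{x\<in>space N. supeq D (\<lambda>t. F t x) (C x)} \<in> sets N"
proof -
  have "Measurable.pred N (\<lambda>x. supeq D (\<lambda>t. F t x) (C x))"
    unfolding supeq_def
  proof (intro pred_intros_logic measurable_pred_countable[OF cD] pred_intros_countable)
    fix t assume "t \<in> D"
    note [measurable] = Fm[OF this] Cm
    show "Measurable.pred N (\<lambda>x. F t x \<le> C x)" by measurable
    fix n :: nat show "Measurable.pred N (\<lambda>x. C x - 1 / (real n + 1) < F t x)" by measurable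
  qed
  then show ?thesis by (simp add: pred_def)
qed

lemma countable_DD: "countable (DD q)"
  unfolding DD_def using countable_Dy by (rule countable_subset[rotated]) auto

lemma bm_L:
  fixes Z :: "'a \<Rightarrow> 'b" and S :: "'b measure" and g h :: "'b \<Rightarrow> real"
  assumes bm: "std_brownian_motion M B"
    and I: "indep_rvs M S Z (Pi\<^sub>M {0::real..} (\<lambda>_. borel)) (\<lambda>\<omega>. \<lambda>t\<in>{0..}. B t \<omega>)"
    and g: "g \<in> borel_measurable S" and h: "h \<in> borel_measurable S" and qD: "q \<in> Dy" and q: "0 < q"
  shows "AE \<omega> in M. \<not> supeq (DD q) (\<lambda>t. g (Z \<omega>) + B t \<omega>) (h (Z \<omega>))"
proof -
  interpret prob_space M using bm_prob[OF bm] .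
  define P where "P = (\<lambda>\<omega>. \<lambda>t\<in>{0::real..}. B t \<omega>)"
  define T where "T = (Pi\<^sub>M {0::real..} (\<lambda>_. borel :: real measure))"
  have Zm: "Z \<in> measurable M S" and Pm: "P \<in> measurable M T"
    using I unfolding indep_rvs_def P_def T_def by auto
  have DD0: "DD q \<subseteq> {0..}" unfolding DD_def by auto
  define E where "E = {p \<in> space (S \<Otimes>\<^sub>M T). supeq (DD q) (\<lambda>t. g (fst p) + snd p t) (h (fst p))}"
  have Es: "E \<in> sets (S \<Otimes>\<^sub>M T)"
    unfolding E_def
  proof (rule supeq_pred2[OF countable_DD])
    fix t assume t: "t \<in> DD q"
    have "(\<lambda>f. f t) \<in> borel_measurable T"
      unfolding T_def using measurable_component_singleton[of t "{0..}" "\<lambda>_. borel"] t DD0 by auto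
    then show "(\<lambda>p. g (fst p) + snd p t) \<in> borel_measurable (S \<Otimes>\<^sub>M T)" using g by measurable
  qed (use h in measurable)
  define N where "N = {\<omega>\<in>space M. (Z \<omega>, P \<omega>) \<in> E}"
  have Nev: "N \<in> events" unfolding N_def using Zm Pm Es by measurable
  show ?thesis
  proof (rule AE_I[OF _ _ Nev])
    show "{\<omega> \<in> space M. \<not> \<not> supeq (DD q) (\<lambda>t. g (Z \<omega>) + B t \<omega>) (h (Z \<omega>))} \<subseteq> N"
    proof
      fix \<omega> assume "\<omega> \<in> {\<omega> \<in> space M. \<not> \<not> supeq (DD q) (\<lambda>t. g (Z \<omega>) + B t \<omega>) (h (Z \<omega>))}"
      then have \<omega>: "\<omega> \<in> space M" "supeq (DD q) (\<lambda>t. g (Z \<omega>) + B t \<omega>) (h (Z \<omega>))" by auto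
      have "supeq (DD q) (\<lambda>t. g (Z \<omega>) + P \<omega> t) (h (Z \<omega>))"
        using \<omega>(2) by (subst supeq_cong[where G="\<lambda>t. g (Z \<omega>) + B t \<omega>"]) (use DD0 in \<open>auto simp: P_def\<close>)
      moreover have "Z \<omega> \<in> space S" "P \<omega> \<in> space T" using Zm Pm \<omega>(1) by (auto simp: measurable_def)
      ultimately show "\<omega> \<in> N" unfolding N_def E_def using \<omega>(1) by (auto simp: space_pair_measure)
    qed
    show "emeasure M N = 0" unfolding N_def
    proof (rule indep_rvs_null[OF prob_space_axioms I[folded P_def T_def] Es])
      fix z assume z: "z \<in> space S"
      have sl: "Pair z -` E = {f \<in> space T. supeq (DD q) (\<lambda>t. g z + f t) (h z)}"
        unfolding E_def using z by (auto simp: space_pair_measure)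
      have "emeasure (distr M T P) (Pair z -` E) = emeasure M (P -` (Pair z -` E) \<inter> space M)"
        by (rule emeasure_distr[OF Pm sets_Pair1[OF Es]])
      also have "P -` (Pair z -` E) \<inter> space M = {\<omega>\<in>space M. supeq (DD q) (\<lambda>t. B t \<omega>) (h z - g z)}"
      proof -
        have "supeq (DD q) (\<lambda>t. g z + P \<omega> t) (h z) = supeq (DD q) (\<lambda>t. B t \<omega>) (h z - g z)" for \<omega>
          by (subst supeq_cong[where G="\<lambda>t. g z + B t \<omega>"]) (use DD0 in \<open>auto simp: P_def supeq_shift\<close>)
        then show ?thesis unfolding sl using Pm by (auto simp: measurable_def)
      qed
      also have "emeasure M {\<omega>\<in>space M. supeq (DD q) (\<lambda>t. B t \<omega>) (h z - g z)} = 0"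
      proof -
        have ms: "{\<omega>\<in>space M. supeq (DD q) (\<lambda>t. B t \<omega>) (h z - g z)} \<in> events"
          by (rule supeq_sets[OF countable_DD]) (use bm_meas[OF bm] DD0 in auto)
        show ?thesis
          using bm_sup_null[OF bm qD q, of "h z - g z"] AE_iff_measurable[OF ms] by simp
      qed
      finally show "emeasure (distr M T P) (Pair z -` E) = 0" .
    qed
  qed
qed

theorem lemma3p2:
  fixes M :: "'a measure" and \<pi> :: "(real \<times> real) measure"
    and \<psi> :: "real \<Rightarrow> real" and B :: "real \<Rightarrow> 'a \<Rightarrow> real" and X Y :: "'a \<Rightarrow> real"
  assumes "prob_space M"
    and "std_brownian_motion M B"
    and "X \<in> borel_measurable M" and "Y \<in> borel_measurable M"
    and "distr M (borel \<Otimes>\<^sub>M borel) (\<lambda>\<omega>. (X \<omega>, Y \<omega>)) = \<pi>"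
    and "\<forall>x. measure (distr \<pi> borel fst) {x} = 0"
    and "\<psi> \<in> borel_measurable borel"
    and "indep_rvs M (borel \<Otimes>\<^sub>M borel) (\<lambda>\<omega>. (X \<omega>, Y \<omega>))
           (Pi\<^sub>M {0::real..} (\<lambda>_. borel)) (\<lambda>\<omega>. \<lambda>t\<in>{0..}. B t \<omega>)"
  shows "AE \<omega> in M.
           hitting_time {(x, y). x \<ge> \<psi> y} B (X \<omega>) (Y \<omega>) \<omega>
         = hitting_time {(x, y). x > \<psi> y} B (X \<omega>) (Y \<omega>) \<omega>"
proof -
  interpret prob_space M by fact
  note bm = assms(2)
  note I = assms(8)
  have Xm: "X \<in> borel_measurable M" by fact
  have Zm: "(\<lambda>\<omega>. (X \<omega>, Y \<omega>)) \<in> measurable M (borel \<Otimes>\<^sub>M borel)" using assms(3,4) by measurable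
  have AEa: "AE \<omega> in M. X \<omega> \<notin> Cset \<psi>"
  proof -
    have "AE \<omega> in M. \<forall>c\<in>Cset \<psi>. X \<omega> \<noteq> c"
    proof (rule AE_ball_countable'[OF _ countable_Cset])
      fix c
      have d: "distr \<pi> borel fst = distr M borel X"
        unfolding assms(5)[symmetric] using Zm by (subst distr_distr) (auto simp: comp_def)
      have "emeasure M {\<omega>\<in>space M. X \<omega> = c} = emeasure (distr M borel X) {c}"
        using Xm by (subst emeasure_distr) (auto intro!: arg_cong[where f="emeasure M"])
      also have "\<dots> = ennreal (measure (distr M borel X) {c})"
        using finite_measure.emeasure_eq_measure[OF prob_space.finite_measure[OF prob_space_distr[OF Xm]]] by blast
      also have "\<dots> = 0" using assms(6) d by simp
      finally have "emeasure M {\<omega>\<in>space M. X \<omega> = c} = 0" .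
      moreover have "{\<omega>\<in>space M. X \<omega> = c} \<in> events" using Xm by measurable
      ultimately show "AE \<omega> in M. X \<omega> \<noteq> c" by (intro AE_I[of _ _ "{\<omega>\<in>space M. X \<omega> = c}"]) auto
    qed
    then show ?thesis by (auto elim!: eventually_mono)
  qed
  define Q where "Q = {q \<in> Dy. 0 < q}"
  have cQ: "countable Q" unfolding Q_def using countable_Dy by (rule countable_subset[rotated]) auto
  define negm where "negm = (\<lambda>f::real\<Rightarrow>real. \<lambda>t\<in>{0::real..}. - f t)"
  have negmm: "negm \<in> measurable (Pi\<^sub>M {0::real..} (\<lambda>_. borel)) (Pi\<^sub>M {0::real..} (\<lambda>_. borel))"
    unfolding negm_def
  proof (rule measurable_restrict)
    fix t :: real assume t: "t \<in> {0..}"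
    have "(\<lambda>f::real\<Rightarrow>real. f t) \<in> borel_measurable (Pi\<^sub>M {0::real..} (\<lambda>_. borel))"
      using measurable_component_singleton[OF t, of "\<lambda>_. borel"] by simp
    then show "(\<lambda>f::real\<Rightarrow>real. - f t) \<in> borel_measurable (Pi\<^sub>M {0::real..} (\<lambda>_. borel))" by (rule borel_measurable_uminus)
  qed
  have I': "indep_rvs M (borel \<Otimes>\<^sub>M borel) (\<lambda>\<omega>. (X \<omega>, Y \<omega>))
           (Pi\<^sub>M {0::real..} (\<lambda>_. borel)) (\<lambda>\<omega>. \<lambda>t\<in>{0..}. - B t \<omega>)"
  proof -
    have "indep_rvs M (borel \<Otimes>\<^sub>M borel) (\<lambda>\<omega>. (X \<omega>, Y \<omega>))
           (Pi\<^sub>M {0::real..} (\<lambda>_. borel)) (\<lambda>\<omega>. negm (\<lambda>t\<in>{0..}. B t \<omega>))"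
      by (rule indep_rvs_compose2[OF assms(1) I negmm])
    moreover have "(\<lambda>\<omega>. negm (\<lambda>t\<in>{0..}. B t \<omega>)) = (\<lambda>\<omega>. \<lambda>t\<in>{0..}. - B t \<omega>)"
      unfolding negm_def by (auto simp: fun_eq_iff)
    ultimately show ?thesis by simp
  qed
  have fstm: "fst \<in> borel_measurable (borel \<Otimes>\<^sub>M borel :: (real \<times> real) measure)" by measurable
  have AEb: "AE \<omega> in M. \<forall>q\<in>Q. \<forall>r\<in>\<rat>. \<not> supeq (DD q) (\<lambda>t. Y \<omega> + B t \<omega>) (real_of_ereal (Phi \<psi> r (X \<omega>)))"
  proof (intro AE_ball_countable'[OF _ cQ] AE_ball_countable'[OF _ countable_rat])
    fix q r assume q: "q \<in> Q"
    have hm: "(\<lambda>p. real_of_ereal (Phi \<psi> r (fst p))) \<in> borel_measurable (borel \<Otimes>\<^sub>M borel)"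
      using Phi_measurable[of \<psi> r] fstm by measurable
    show "AE \<omega> in M. \<not> supeq (DD q) (\<lambda>t. Y \<omega> + B t \<omega>) (real_of_ereal (Phi \<psi> r (X \<omega>)))"
      using bm_L[OF bm I _ hm, of snd q] q unfolding Q_def by simp
  qed
  have AEc: "AE \<omega> in M. \<forall>q\<in>Q. \<not> supeq (DD q) (\<lambda>t. Y \<omega> + B t \<omega>) (Y \<omega>)"
  proof (intro AE_ball_countable'[OF _ cQ])
    fix q assume q: "q \<in> Q"
    show "AE \<omega> in M. \<not> supeq (DD q) (\<lambda>t. Y \<omega> + B t \<omega>) (Y \<omega>)"
      using bm_L[OF bm I, of snd snd q] q unfolding Q_def by simp
  qed
  have AEd: "AE \<omega> in M. \<forall>q\<in>Q. \<forall>r\<in>\<rat>. \<not> supeq (DD q) (\<lambda>t. - (Y \<omega> + B t \<omega>)) (- real_of_ereal (Phi' \<psi> r (X \<omega>)))"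
  proof (intro AE_ball_countable'[OF _ cQ] AE_ball_countable'[OF _ countable_rat])
    fix q r assume q: "q \<in> Q"
    have hm: "(\<lambda>p. - real_of_ereal (Phi' \<psi> r (fst p))) \<in> borel_measurable (borel \<Otimes>\<^sub>M borel)"
      using Phi'_measurable[of \<psi> r] fstm by measurable
    have gm: "(\<lambda>p. - snd p) \<in> borel_measurable (borel \<Otimes>\<^sub>M borel :: (real \<times> real) measure)" by measurable
    have "AE \<omega> in M. \<not> supeq (DD q) (\<lambda>t. - Y \<omega> + - B t \<omega>) (- real_of_ereal (Phi' \<psi> r (X \<omega>)))"
      using bm_L[OF bm_uminus[OF bm] I' gm hm, of q] q unfolding Q_def by simp
    moreover have "(\<lambda>t. - Y \<omega> + - B t \<omega>) = (\<lambda>t. - (Y \<omega> + B t \<omega>))" for \<omega> by auto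
    ultimately show "AE \<omega> in M. \<not> supeq (DD q) (\<lambda>t. - (Y \<omega> + B t \<omega>)) (- real_of_ereal (Phi' \<psi> r (X \<omega>)))"
      by simp
  qed
  show ?thesis
    using AEa AEb AEc AEd AE_space
  proof eventually_elim
    case (elim \<omega>)
    have cont: "continuous_on {0..} (\<lambda>t. Y \<omega> + B t \<omega>)"
      using bm_cont[OF bm elim(5)] by (intro continuous_intros)
    have "Inf (ereal ` {t. 0 \<le> t \<and> \<psi> (Y \<omega> + B t \<omega>) \<le> X \<omega>}) = Inf (ereal ` {t. 0 \<le> t \<and> \<psi> (Y \<omega> + B t \<omega>) < X \<omega>})"
    proof (rule det[OF cont _ elim(1)])
      show "Y \<omega> + B 0 \<omega> = Y \<omega>" using bm_zero[OF bm elim(5)] by simp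
    next
      fix q :: real assume "q \<in> Dy" "0 < q"
      then have qQ: "q \<in> Q" unfolding Q_def by simp
      show "\<not> supeq (DD q) (\<lambda>t. Y \<omega> + B t \<omega>) (Y \<omega>)" using elim(3) qQ by blast
    next
      fix q r :: real assume "q \<in> Dy" "0 < q" and r: "r \<in> \<rat>"
      then have qQ: "q \<in> Q" unfolding Q_def by simp
      show "\<not> supeq (DD q) (\<lambda>t. Y \<omega> + B t \<omega>) (real_of_ereal (Phi \<psi> r (X \<omega>)))" using elim(2) qQ r by blast
    next
      fix q r :: real assume "q \<in> Dy" "0 < q" and r: "r \<in> \<rat>"
      then have qQ: "q \<in> Q" unfolding Q_def by simp
      show "\<not> supeq (DD q) (\<lambda>t. - (Y \<omega> + B t \<omega>)) (- real_of_ereal (Phi' \<psi> r (X \<omega>)))" using elim(4) qQ r by blast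
    qed
    then show ?case unfolding hitting_time_def by simp
  qed
qed

end
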